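(* Let $n=2$ and let $(X,\mathbf h,\Lambda,\widetilde B)$ be a quantum seed with $b_{12}\neq0$, and let $X'_1$, $X'_2$ be the corresponding cluster variables of $\mu_1(X,\mathbf h,\Lambda,\widetilde B)$ and $\mu_2(X,\mathbf h,\Lambda,\widetilde B)$. Then $$\mathbb{ZP}[X_1,X'_1,X_2^{\pm1}]=\mathbb{ZP}[X_1,X'_1,X_2,X'_2]+\mathbb{ZP}[X_1,X_2^{\pm1}].$$
   Context: Notation: $[a,b]=\{a,a+1,\dots,b\}$; $[x]_+=\max(x,0)$, applied entrywise to vectors; $e_1,\dots,e_m$ is the standard basis of $\mathbb Z^m$. Fix integers $m\ge n\ge 1$. A compatible pair $(\Lambda,\widetilde B)$ consists of an $m\times n$ integer matrix $\widetilde B=(b_{kl})$ and a skew-symmetric $m\times m$ integer matrix $\Lambda$ such that $\Lambda\widetilde B=-\begin{bmatrix}D\\0\end{bmatrix}$ for some $D=\mathrm{diag}(\tilde d_1,\dots,\tilde d_n)$ with all $\tilde d_k\in\mathbb Z_{>0}$. Write $\Lambda(a,b)=a^T\Lambda b$. Fix positive integers $d_1,\dots,d_n$ such that $d_k$ divides every entry of the $k$-th column $b^k$ of $\widetilde B$; $\beta^k=\frac1{d_k}b^k$. The quantum torus $\mathcal T(\Lambda)$ is the $\mathbb Z[q^{\pm1/2}]$-algebra with basis $\{X(c)\mid c\in\mathbb Z^m\}$ and multiplication $X(c)X(d)=q^{\frac12\Lambda(c,d)}X(c+d)$; $\mathcal F$ is its skew field of fractions, $X_k=X(e_k)$. For $k\in[1,n]$,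 $\mathbf h_k=(h_{k,0},\dots,h_{k,d_k})$ with $h_{k,r}\in\mathbb Z[q^{\pm1/2}]$, $h_{k,r}=h_{k,d_k-r}$, $h_{k,0}=h_{k,d_k}=1$. A quantum seed $(X,\mathbf h,\Lambda,\widetilde B)$ consists of these data and the map $X:c\mapsto X(c)$. Its mutation in direction $i$ has cluster variables $X'_k=X_k$ for $k\ne i$ and $X'_i=\sum_{r=0}^{d_i}h_{i,r}X(r[\beta^i]_++(d_i-r)[-\beta^i]_+-e_i)$. $\mathbb{ZP}$ is the ring of Laurent polynomials in $X_{n+1},\dots,X_m$ with coefficients in $\mathbb Z[q^{\pm1/2}]$; for $Y_1,\dots,Y_s\in\mathcal F$, $\mathbb{ZP}[Y_1,\dots,Y_s]$ is the subring of $\mathcal F$ generated by $\mathbb{ZP}$ and the $Y_k$ (exponent $\pm1$ means both $Y$ and $Y^{-1}$ are adjoined). The sum of two such subrings means the set of sums of elements (an additive subgroup of $\mathcal F$). *)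

theory Defs
  imports Main "HOL-Library.Poly_Mapping"
begin

text \<open>Model of the quantum torus T(Lambda) over Z[q^(+-1/2)].
  Write t = q^(1/2). T(Lambda) is the free Z-module with basis t^k X(c),
  k in Z, c in Z^m, and (t^k X(c)) (t^l X(d)) = t^(k+l+Lambda(c,d)) X(c+d).
  An element is a finitely supported map (k,c) to its integer coefficient.
  Vectors of Z^m are functions nat to int (indices 1..m; always 0 elsewhere).\<close>

type_synonym vec = "nat \<Rightarrow> int"
type_synonym qtorus = "(int \<times> vec) \<Rightarrow>\<^sub>0 int"
type_synonym laurent = "int \<Rightarrow>\<^sub>0 int"  \<comment> \<open>Z[t^(+-1)], t = q^(1/2)\<close>

definition lam :: "nat \<Rightarrow> (nat \<Rightarrow> nat \<Rightarrow> int) \<Rightarrow> vec \<Rightarrow> vec \<Rightarrow> int" where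
  "lam m L a b = (\<Sum>i\<in>{1..m}. \<Sum>j\<in>{1..m}. a i * L i j * b j)"

definition gmul :: "nat \<Rightarrow> (nat \<Rightarrow> nat \<Rightarrow> int) \<Rightarrow> int \<times> vec \<Rightarrow> int \<times> vec \<Rightarrow> int \<times> vec" where
  "gmul m L x y = (fst x + fst y + lam m L (snd x) (snd y), (\<lambda>i. snd x i + snd y i))"

definition qmult :: "nat \<Rightarrow> (nat \<Rightarrow> nat \<Rightarrow> int) \<Rightarrow> qtorus \<Rightarrow> qtorus \<Rightarrow> qtorus" where
  "qmult m L f g = (\<Sum>x\<in>Poly_Mapping.keys f. \<Sum>y\<in>Poly_Mapping.keys g.
       Poly_Mapping.single (gmul m L x y) (Poly_Mapping.lookup f x * Poly_Mapping.lookup g y))"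

definition Xmon :: "vec \<Rightarrow> qtorus" where
  "Xmon c = Poly_Mapping.single (0, c) 1"

definition zvec :: vec where "zvec = (\<lambda>_. 0)"

definition coef :: "laurent \<Rightarrow> qtorus" where
  "coef p = (\<Sum>k\<in>Poly_Mapping.keys p. Poly_Mapping.single (k, zvec) (Poly_Mapping.lookup p k))"

definition unitv :: "nat \<Rightarrow> vec" where
  "unitv k = (\<lambda>j. if j = k then 1 else 0)"

definition vneg :: "vec \<Rightarrow> vec" where "vneg v = (\<lambda>j. - v j)"

definition vpos :: "vec \<Rightarrow> vec" where "vpos v = (\<lambda>j. max (v j) 0)"

definition beta :: "nat \<Rightarrow> (nat \<Rightarrow> nat \<Rightarrow> int) \<Rightarrow> (nat \<Rightarrow> nat) \<Rightarrow> nat \<Rightarrow> vec" where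
  "beta m B d i = (\<lambda>k. if k \<in> {1..m} then B k i div int (d i) else 0)"

text \<open>The cluster variable X'_i of the mutation mu_i of the seed.\<close>
definition Xmut :: "nat \<Rightarrow> (nat \<Rightarrow> nat \<Rightarrow> int) \<Rightarrow> (nat \<Rightarrow> nat \<Rightarrow> int) \<Rightarrow> (nat \<Rightarrow> nat)
     \<Rightarrow> (nat \<Rightarrow> nat \<Rightarrow> laurent) \<Rightarrow> nat \<Rightarrow> qtorus" where
  "Xmut m L B d h i = (\<Sum>r\<in>{0..d i}. qmult m L (coef (h i r))
      (Xmon (\<lambda>k. int r * vpos (beta m B d i) k
               + int (d i - r) * vpos (vneg (beta m B d i)) k - unitv i k)))"

inductive_set gen_subring :: "nat \<Rightarrow> (nat \<Rightarrow> nat \<Rightarrow> int) \<Rightarrow> qtorus set \<Rightarrow> qtorus set"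
  for m L S where
  base: "x \<in> S \<Longrightarrow> x \<in> gen_subring m L S"
| one: "Xmon zvec \<in> gen_subring m L S"
| zero: "0 \<in> gen_subring m L S"
| add: "x \<in> gen_subring m L S \<Longrightarrow> y \<in> gen_subring m L S \<Longrightarrow> x + y \<in> gen_subring m L S"
| neg: "x \<in> gen_subring m L S \<Longrightarrow> - x \<in> gen_subring m L S"
| mult: "x \<in> gen_subring m L S \<Longrightarrow> y \<in> gen_subring m L S \<Longrightarrow> qmult m L x y \<in> gen_subring m L S"

text \<open>Generators of ZP: the coefficients and X_j^(+-1) for frozen j in [n+1,m].\<close>
definition ZP_gens :: "nat \<Rightarrow> nat \<Rightarrow> qtorus set" where
  "ZP_gens n m = range coef \<union> Xmon ` unitv ` {n+1..m} \<union> Xmon ` (\<lambda>j. vneg (unitv j)) ` {n+1..m}"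

text \<open>ZP[Y_1,...,Y_s] (Y's given as a set; for exponent +-1 include both Y and Y^(-1)).\<close>
definition ZP_adj :: "nat \<Rightarrow> nat \<Rightarrow> (nat \<Rightarrow> nat \<Rightarrow> int) \<Rightarrow> qtorus set \<Rightarrow> qtorus set" where
  "ZP_adj n m L Ys = gen_subring m L (ZP_gens n m \<union> Ys)"

definition set_plus_q :: "qtorus set \<Rightarrow> qtorus set \<Rightarrow> qtorus set" where
  "set_plus_q A B = {a + b | a b. a \<in> A \<and> b \<in> B}"

end

theory Submission
  imports Defs
begin


lemma pm_expand: "f = (\<Sum>x\<in>Poly_Mapping.keys f. Poly_Mapping.single x (Poly_Mapping.lookup f x))"
  by (rule poly_mapping_eqI) (simp add: lookup_sum lookup_single when_def in_keys_iff)

lemma qmult_sup: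
  assumes "finite S" "finite T" "Poly_Mapping.keys f \<subseteq> S" "Poly_Mapping.keys g \<subseteq> T"
  shows "qmult m L f g = (\<Sum>x\<in>S. \<Sum>y\<in>T.
       Poly_Mapping.single (gmul m L x y) (Poly_Mapping.lookup f x * Poly_Mapping.lookup g y))"
proof -
  have "qmult m L f g = (\<Sum>x\<in>S. \<Sum>y\<in>Poly_Mapping.keys g.
       Poly_Mapping.single (gmul m L x y) (Poly_Mapping.lookup f x * Poly_Mapping.lookup g y))"
    unfolding qmult_def
    by (rule sum.mono_neutral_left) (use assms in \<open>auto simp: in_keys_iff\<close>)
  also have "\<dots> = (\<Sum>x\<in>S. \<Sum>y\<in>T.
       Poly_Mapping.single (gmul m L x y) (Poly_Mapping.lookup f x * Poly_Mapping.lookup g y))"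
    by (rule sum.cong[OF refl], rule sum.mono_neutral_left) (use assms in \<open>auto simp: in_keys_iff\<close>)
  finally show ?thesis .
qed

lemma qmult_add_left: "qmult m L (f + g) k = qmult m L f k + qmult m L g k"
proof -
  let ?S = "Poly_Mapping.keys f \<union> Poly_Mapping.keys g"
  have s: "Poly_Mapping.keys (f+g) \<subseteq> ?S" by (rule keys_add)
  show ?thesis
    apply (subst (1 2 3) qmult_sup[where S="?S" and T="Poly_Mapping.keys k"])
    using s by (auto simp: lookup_add distrib_right single_add sum.distrib)
qed

lemma qmult_add_right: "qmult m L k (f + g) = qmult m L k f + qmult m L k g"
proof -
  let ?S = "Poly_Mapping.keys f \<union> Poly_Mapping.keys g"
  have s: "Poly_Mapping.keys (f+g) \<subseteq> ?S" by (rule keys_add)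
  show ?thesis
    apply (subst (1 2 3) qmult_sup[where T="?S" and S="Poly_Mapping.keys k"])
    using s by (auto simp: lookup_add distrib_left single_add sum.distrib)
qed

lemma qmult_zero_left[simp]: "qmult m L 0 f = 0" by (simp add: qmult_def)
lemma qmult_zero_right[simp]: "qmult m L f 0 = 0" by (simp add: qmult_def)

lemma qmult_neg_left: "qmult m L (- f) g = - qmult m L f g"
proof -
  have "qmult m L f g + qmult m L (- f) g = 0" by (simp flip: qmult_add_left)
  thus ?thesis by (metis neg_eq_iff_add_eq_0)
qed
lemma qmult_neg_right: "qmult m L g (- f) = - qmult m L g f"
proof -
  have "qmult m L g f + qmult m L g (- f) = 0" by (simp flip: qmult_add_right)
  thus ?thesis by (metis neg_eq_iff_add_eq_0)
qed
lemma qmult_diff_left: "qmult m L (f - g) k = qmult m L f k - qmult m L g k"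
  using qmult_add_left[of m L f "-g" k] qmult_neg_left by simp
lemma qmult_diff_right: "qmult m L k (f - g) = qmult m L k f - qmult m L k g"
  using qmult_add_right[of m L k f "-g"] qmult_neg_right by simp

lemma qmult_sum_left: "qmult m L (\<Sum>i\<in>I. f i) g = (\<Sum>i\<in>I. qmult m L (f i) g)"
  by (induction I rule: infinite_finite_induct) (auto simp: qmult_add_left)
lemma qmult_sum_right: "qmult m L g (\<Sum>i\<in>I. f i) = (\<Sum>i\<in>I. qmult m L g (f i))"
  by (induction I rule: infinite_finite_induct) (auto simp: qmult_add_right)

lemma qmult_single: "qmult m L (Poly_Mapping.single x a) (Poly_Mapping.single y b)
   = Poly_Mapping.single (gmul m L x y) (a * b)"
  by (subst qmult_sup[where S="{x}" and T="{y}"]) auto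

lemma lam_add_left: "lam m L (\<lambda>i. a i + b i) c = lam m L a c + lam m L b c"
  by (simp add: lam_def distrib_right sum.distrib)
lemma lam_add_right: "lam m L c (\<lambda>i. a i + b i) = lam m L c a + lam m L c b"
  by (simp add: lam_def distrib_left sum.distrib algebra_simps)

lemma gmul_assoc: "gmul m L (gmul m L x y) z = gmul m L x (gmul m L y z)"
  by (simp add: gmul_def lam_add_left lam_add_right algebra_simps)

lemma pm_induct:
  fixes f :: qtorus
  assumes "P 0" "\<And>x a. P (Poly_Mapping.single x a)" "\<And>f g. P f \<Longrightarrow> P g \<Longrightarrow> P (f+g)"
  shows "P f"
proof -
  have "\<And>S. finite S \<Longrightarrow> P (\<Sum>x\<in>S. Poly_Mapping.single x (Poly_Mapping.lookup f x))"
  proof -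
    fix S :: "(int \<times> vec) set" assume "finite S"
    thus "P (\<Sum>x\<in>S. Poly_Mapping.single x (Poly_Mapping.lookup f x))"
      by (induction S rule: finite_induct) (use assms in auto)
  qed
  thus ?thesis by (subst pm_expand) simp
qed

lemma qmult_assoc: "qmult m L (qmult m L f g) k = qmult m L f (qmult m L g k)"
proof (induction f rule: pm_induct)
  case (2 x a)
  then show ?case
  proof (induction g rule: pm_induct)
    case (2 y b)
    then show ?case
    proof (induction k rule: pm_induct)
      case (2 z c)
      then show ?case by (simp add: qmult_single gmul_assoc mult.assoc)
    qed (auto simp: qmult_add_right)
  qed (auto simp: qmult_add_right qmult_add_left)
qed (auto simp: qmult_add_left)


definition vadd :: "vec \<Rightarrow> vec \<Rightarrow> vec" where "vadd a b = (\<lambda>i. a i + b i)"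
definition KV :: "qtorus \<Rightarrow> vec set" where "KV f = snd ` Poly_Mapping.keys f"

lemma keys_qmult: "Poly_Mapping.keys (qmult m L f g) \<subseteq> {gmul m L x y | x y. x \<in> Poly_Mapping.keys f \<and> y \<in> Poly_Mapping.keys g}"
  unfolding qmult_def
  apply (rule order.trans[OF keys_sum])
  apply (rule UN_least)
  apply (rule order.trans[OF keys_sum])
  by auto

lemma KV_add: "KV (f + g) \<subseteq> KV f \<union> KV g"
  unfolding KV_def using keys_add[of f g] by auto
lemma KV_neg[simp]: "KV (- f) = KV f"
  unfolding KV_def by simp
lemma KV_sum: "KV (\<Sum>i\<in>I. f i) \<subseteq> (\<Union>i\<in>I. KV (f i))"
proof
  fix v assume "v \<in> KV (\<Sum>i\<in>I. f i)"
  then obtain k where "(k,v) \<in> Poly_Mapping.keys (\<Sum>i\<in>I. f i)" unfolding KV_def by force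
  then obtain i where "i\<in>I" "(k,v) \<in> Poly_Mapping.keys (f i)" using keys_sum[of f I] by blast
  thus "v \<in> (\<Union>i\<in>I. KV (f i))" unfolding KV_def by force
qed
lemma KV_qmult: "KV (qmult m L f g) \<subseteq> {vadd a b | a b. a \<in> KV f \<and> b \<in> KV g}"
  unfolding KV_def using keys_qmult[of m L f g] by (force simp: gmul_def vadd_def)
lemma KV_single: "KV (Poly_Mapping.single (k,c) a) \<subseteq> {c}"
  unfolding KV_def by auto
lemma KV_Xmon: "KV (Xmon c) = {c}"
  unfolding KV_def Xmon_def by auto

lemma coef_single: "coef (Poly_Mapping.single k a) = Poly_Mapping.single (k, zvec) a"
  unfolding coef_def by (cases "a = 0") auto

lemma KV_coef: "KV (coef p) \<subseteq> {zvec}"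
  unfolding coef_def KV_def using keys_sum[of "\<lambda>k. Poly_Mapping.single (k, zvec) (Poly_Mapping.lookup p k)" "Poly_Mapping.keys p"]
  by auto

lemma lam_zvec_left[simp]: "lam m L zvec c = 0" by (simp add: lam_def zvec_def)
lemma lam_zvec_right[simp]: "lam m L c zvec = 0" by (simp add: lam_def zvec_def)
lemma lam_0_left[simp]: "lam m L (\<lambda>_. 0) c = 0" by (simp add: lam_def)
lemma lam_0_right[simp]: "lam m L c (\<lambda>_. 0) = 0" by (simp add: lam_def)

lemma gmul_one_left[simp]: "gmul m L (0, zvec) x = x" by (simp add: gmul_def zvec_def)
lemma gmul_one_right[simp]: "gmul m L x (0, zvec) = x" by (simp add: gmul_def zvec_def)

lemma qmult_one_left[simp]: "qmult m L (Xmon zvec) f = f"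
  unfolding Xmon_def by (induction f rule: pm_induct) (auto simp: qmult_single qmult_add_right)
lemma qmult_one_right[simp]: "qmult m L f (Xmon zvec) = f"
  unfolding Xmon_def by (induction f rule: pm_induct) (auto simp: qmult_single qmult_add_left)

lemma single_decomp1: "Poly_Mapping.single (k,c) a = qmult m L (coef (Poly_Mapping.single k a)) (Xmon c)"
  by (simp add: coef_single Xmon_def qmult_single gmul_def zvec_def)
lemma single_decomp2: "Poly_Mapping.single (k,c) a = qmult m L (Xmon c) (coef (Poly_Mapping.single k a))"
  by (simp add: coef_single Xmon_def qmult_single gmul_def zvec_def)

lemma Xmon_vadd1: "Xmon (vadd a b) = qmult m L (qmult m L (Xmon a) (Xmon b)) (coef (Poly_Mapping.single (- lam m L a b) 1))"
  by (simp add: coef_single Xmon_def qmult_single gmul_def zvec_def vadd_def)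
lemma Xmon_vadd2: "Xmon (vadd a b) = qmult m L (coef (Poly_Mapping.single (- lam m L a b) 1)) (qmult m L (Xmon a) (Xmon b))"
  by (simp add: coef_single Xmon_def qmult_single gmul_def zvec_def vadd_def)

lemma coef_one: "coef (Poly_Mapping.single 0 1) = Xmon zvec"
  by (simp only: coef_single Xmon_def)

lemma gs_mono: assumes "S \<subseteq> S'" shows "gen_subring m L S \<subseteq> gen_subring m L S'"
proof
  fix x assume "x \<in> gen_subring m L S"
  thus "x \<in> gen_subring m L S'"
    by (induction rule: gen_subring.induct) (use assms in \<open>auto intro: gen_subring.intros\<close>)
qed

lemma gs_diff: "x \<in> gen_subring m L S \<Longrightarrow> y \<in> gen_subring m L S \<Longrightarrow> x - y \<in> gen_subring m L S"
  using gen_subring.add[of x m L S "-y"] gen_subring.neg by simp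

lemma gs_sum: "(\<And>i. i \<in> I \<Longrightarrow> f i \<in> gen_subring m L S) \<Longrightarrow> (\<Sum>i\<in>I. f i) \<in> gen_subring m L S"
  by (induction I rule: infinite_finite_induct) (auto intro: gen_subring.intros)

lemma span_mem:
  assumes "\<And>p. coef p \<in> gen_subring m L S"
    and "\<And>c. c \<in> KV f \<Longrightarrow> Xmon c \<in> gen_subring m L S"
  shows "f \<in> gen_subring m L S"
proof -
  have "(\<Sum>x\<in>Poly_Mapping.keys f. Poly_Mapping.single x (Poly_Mapping.lookup f x)) \<in> gen_subring m L S"
  proof (rule gs_sum)
    fix x assume x: "x \<in> Poly_Mapping.keys f"
    obtain k c where xk: "x = (k,c)" by fastforce
    have "c \<in> KV f" using x xk unfolding KV_def by force
    thus "Poly_Mapping.single x (Poly_Mapping.lookup f x) \<in> gen_subring m L S"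
      using assms xk by (simp add: single_decomp1[of _ _ _ m L] gen_subring.mult)
  qed
  thus ?thesis by (subst pm_expand) simp
qed

lemma lam_units:
  assumes "a \<in> {1..m}" "b \<in> {1..m}"
  shows "lam m L (\<lambda>i. if i = a then x else 0) (\<lambda>i. if i = b then y else 0) = x * L a b * y"
proof -
  have "\<And>i. (\<Sum>j\<in>{1..m}. (if i = a then x else 0) * L i j * (if j = b then y else 0))
      = (if i = a then x * L a b * y else 0)"
  proof -
    fix i
    have "(\<Sum>j\<in>{1..m}. (if i = a then x else 0) * L i j * (if j = b then y else 0))
       = (\<Sum>j\<in>{1..m}. if j = b then (if i = a then x * L a b * y else 0) else 0)"
      by (rule sum.cong) auto
    thus "?thesis i" using assms(2) by simp
  qed
  thus ?thesis using assms(1) by (simp add: lam_def)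
qed


lemma xmon_pow_pos:
  assumes "Xmon (unitv j) \<in> gen_subring m L S" "\<And>p. coef p \<in> gen_subring m L S"
  shows "Xmon (\<lambda>i. if i = j then int k else 0) \<in> gen_subring m L S"
proof (induction k)
  case 0
  have "(\<lambda>i. if i = j then int 0 else 0) = zvec" by (auto simp: zvec_def)
  then show ?case by (simp add: gen_subring.one)
next
  case (Suc k)
  have "(\<lambda>i. if i = j then int (Suc k) else 0) = vadd (\<lambda>i. if i = j then int k else 0) (unitv j)"
    by (auto simp: vadd_def unitv_def)
  then show ?case using Suc assms
    by (simp add: Xmon_vadd1[of _ _ m L] gen_subring.mult)
qed

lemma xmon_pow_neg:
  assumes "Xmon (vneg (unitv j)) \<in> gen_subring m L S" "\<And>p. coef p \<in> gen_subring m L S"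
  shows "Xmon (\<lambda>i. if i = j then - int k else 0) \<in> gen_subring m L S"
proof (induction k)
  case 0
  have "(\<lambda>i. if i = j then - int 0 else 0) = zvec" by (auto simp: zvec_def)
  then show ?case by (simp add: gen_subring.one)
next
  case (Suc k)
  have "(\<lambda>i. if i = j then - int (Suc k) else 0) = vadd (\<lambda>i. if i = j then - int k else 0) (vneg (unitv j))"
    by (auto simp: vadd_def unitv_def vneg_def)
  then show ?case using Suc assms
    by (simp add: Xmon_vadd1[of _ _ m L] gen_subring.mult)
qed

lemma xmon_pow_int:
  assumes "z \<ge> 0 \<or> Xmon (vneg (unitv j)) \<in> gen_subring m L S"
    "z \<le> 0 \<or> Xmon (unitv j) \<in> gen_subring m L S" "\<And>p. coef p \<in> gen_subring m L S"
  shows "Xmon (\<lambda>i. if i = j then z else 0) \<in> gen_subring m L S"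
proof (cases "z \<ge> 0")
  case True
  show ?thesis
  proof (cases "z = 0")
    case True
    have "(\<lambda>i. if i = j then z else 0) = zvec" using True by (auto simp: zvec_def)
    then show ?thesis by (simp add: gen_subring.one)
  next
    case False
    have "Xmon (\<lambda>i. if i = j then int (nat z) else 0) \<in> gen_subring m L S"
      using xmon_pow_pos[of j m L S "nat z"] assms False \<open>z \<ge> 0\<close> by simp
    moreover have "int (nat z) = z" using \<open>z \<ge> 0\<close> by simp
    ultimately show ?thesis by metis
  qed
next
  case False
  have "Xmon (\<lambda>i. if i = j then - int (nat (-z)) else 0) \<in> gen_subring m L S"
    using xmon_pow_neg[of j m L S "nat (-z)"] assms False by simp
  moreover have "- int (nat (-z)) = z" using False by simp
  ultimately show ?thesis by metis
qed

lemma mon_in: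
  assumes "\<And>p. coef p \<in> gen_subring m L S"
    and "\<forall>i. i \<notin> {1..m} \<longrightarrow> c i = 0"
    and "\<forall>j\<in>{1..m}. Xmon (\<lambda>i. if i = j then c j else 0) \<in> gen_subring m L S"
  shows "Xmon c \<in> gen_subring m L S"
proof -
  have "N \<le> m \<Longrightarrow> Xmon (\<lambda>i. if i \<in> {1..N} then c i else 0) \<in> gen_subring m L S" for N
  proof (induction N)
    case 0
    have "(\<lambda>i. if i \<in> {1..0::nat} then c i else 0) = zvec" by (auto simp: zvec_def)
    then show ?case by (simp add: gen_subring.one)
  next
    case (Suc N)
    have e: "(\<lambda>i. if i \<in> {1..Suc N} then c i else 0) =
       vadd (\<lambda>i. if i \<in> {1..N} then c i else 0) (\<lambda>i. if i = Suc N then c (Suc N) else 0)"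
      by (auto simp: vadd_def)
    have "Xmon (\<lambda>i. if i = Suc N then c (Suc N) else 0) \<in> gen_subring m L S"
      using assms(3) Suc.prems by auto
    then show ?case using Suc assms(1) unfolding e
      by (simp add: Xmon_vadd1[of _ _ m L] gen_subring.mult)
  qed
  from this[of m] have "Xmon (\<lambda>i. if i \<in> {1..m} then c i else 0) \<in> gen_subring m L S" by simp
  moreover have "(\<lambda>i. if i \<in> {1..m} then c i else 0) = c" using assms(2) by auto
  ultimately show ?thesis by simp
qed


lemma span_apply_right:
  assumes "0 \<in> R" "\<And>x y. x \<in> R \<Longrightarrow> y \<in> R \<Longrightarrow> x + y \<in> R"
    and "\<And>c p. c \<in> KV f \<Longrightarrow> qmult m L (qmult m L g (Xmon c)) (coef p) \<in> R"
  shows "qmult m L g f \<in> R"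
proof -
  have sumR: "\<And>(I::(int \<times> vec) set) F. finite I \<Longrightarrow> (\<And>i. i \<in> I \<Longrightarrow> F i \<in> R) \<Longrightarrow> sum F I \<in> R"
  proof -
    fix I :: "(int \<times> vec) set" and F :: "int \<times> vec \<Rightarrow> qtorus" assume "finite I" "\<And>i. i \<in> I \<Longrightarrow> F i \<in> R"
    thus "sum F I \<in> R" by (induction I rule: finite_induct) (use assms in auto)
  qed
  have "qmult m L g f = (\<Sum>x\<in>Poly_Mapping.keys f. qmult m L g (Poly_Mapping.single x (Poly_Mapping.lookup f x)))"
    by (subst pm_expand[of f]) (simp add: qmult_sum_right)
  also have "\<dots> \<in> R"
  proof (rule sumR)
    fix x assume x: "x \<in> Poly_Mapping.keys f"
    obtain k c where xk: "x = (k,c)" by fastforce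
    have "c \<in> KV f" using x xk unfolding KV_def by force
    thus "qmult m L g (Poly_Mapping.single x (Poly_Mapping.lookup f x)) \<in> R"
    proof -
      have "qmult m L g (Poly_Mapping.single x (Poly_Mapping.lookup f x))
        = qmult m L g (qmult m L (Xmon c) (coef (Poly_Mapping.single k (Poly_Mapping.lookup f x))))"
        unfolding xk by (subst single_decomp2[of _ _ _ m L]) (rule refl)
      also have "\<dots> = qmult m L (qmult m L g (Xmon c)) (coef (Poly_Mapping.single k (Poly_Mapping.lookup f x)))"
        by (rule qmult_assoc[symmetric])
      finally show ?thesis using assms(3) \<open>c \<in> KV f\<close> by simp
    qed
  qed simp
  finally show ?thesis .
qed

lemma span_apply_left:
  assumes "0 \<in> R" "\<And>x y. x \<in> R \<Longrightarrow> y \<in> R \<Longrightarrow> x + y \<in> R"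
    and "\<And>c p. c \<in> KV f \<Longrightarrow> qmult m L (coef p) (qmult m L (Xmon c) g) \<in> R"
  shows "qmult m L f g \<in> R"
proof -
  have sumR: "\<And>(I::(int \<times> vec) set) F. finite I \<Longrightarrow> (\<And>i. i \<in> I \<Longrightarrow> F i \<in> R) \<Longrightarrow> sum F I \<in> R"
  proof -
    fix I :: "(int \<times> vec) set" and F :: "int \<times> vec \<Rightarrow> qtorus" assume "finite I" "\<And>i. i \<in> I \<Longrightarrow> F i \<in> R"
    thus "sum F I \<in> R" by (induction I rule: finite_induct) (use assms in auto)
  qed
  have "qmult m L f g = (\<Sum>x\<in>Poly_Mapping.keys f. qmult m L (Poly_Mapping.single x (Poly_Mapping.lookup f x)) g)"
    by (subst pm_expand[of f]) (simp add: qmult_sum_left)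
  also have "\<dots> \<in> R"
  proof (rule sumR)
    fix x assume x: "x \<in> Poly_Mapping.keys f"
    obtain k c where xk: "x = (k,c)" by fastforce
    have "c \<in> KV f" using x xk unfolding KV_def by force
    thus "qmult m L (Poly_Mapping.single x (Poly_Mapping.lookup f x)) g \<in> R"
    proof -
      have "qmult m L (Poly_Mapping.single x (Poly_Mapping.lookup f x)) g
        = qmult m L (qmult m L (coef (Poly_Mapping.single k (Poly_Mapping.lookup f x))) (Xmon c)) g"
        unfolding xk by (subst single_decomp1[of _ _ _ m L]) (rule refl)
      also have "\<dots> = qmult m L (coef (Poly_Mapping.single k (Poly_Mapping.lookup f x))) (qmult m L (Xmon c) g)"
        by (rule qmult_assoc)
      finally show ?thesis using assms(3) \<open>c \<in> KV f\<close> by simp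
    qed
  qed simp
  finally show ?thesis .
qed

definition mv :: "nat \<Rightarrow> (nat \<Rightarrow> nat \<Rightarrow> int) \<Rightarrow> (nat \<Rightarrow> nat) \<Rightarrow> nat \<Rightarrow> nat \<Rightarrow> vec" where
  "mv m B d i r = (\<lambda>k. int r * vpos (beta m B d i) k
               + int (d i - r) * vpos (vneg (beta m B d i)) k - unitv i k)"

lemma Xmut_mv: "Xmut m L B d h i = (\<Sum>r\<in>{0..d i}. qmult m L (coef (h i r)) (Xmon (mv m B d i r)))"
  unfolding Xmut_def mv_def by (rule refl)

lemma KV_term: "KV (qmult m L (coef p) (Xmon v)) \<subseteq> {v}"
proof
  fix x assume x: "x \<in> KV (qmult m L (coef p) (Xmon v))"
  have "x \<in> {vadd a b | a b. a \<in> KV (coef p) \<and> b \<in> KV (Xmon v)}"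
    using KV_qmult[of m L "coef p" "Xmon v"] x by (rule subsetD)
  then obtain a b where "a \<in> KV (coef p)" "b \<in> KV (Xmon v)" "x = vadd a b" by auto
  moreover have "a = zvec" using KV_coef \<open>a \<in> KV (coef p)\<close> by auto
  moreover have "b = v" using KV_Xmon \<open>b \<in> KV (Xmon v)\<close> by auto
  ultimately show "x \<in> {v}" by (simp add: vadd_def zvec_def)
qed

lemma KV_Xmut: "KV (\<Sum>r\<in>I. qmult m L (coef (h i r)) (Xmon (mv m B d i r))) \<subseteq> mv m B d i ` I"
proof
  fix x assume "x \<in> KV (\<Sum>r\<in>I. qmult m L (coef (h i r)) (Xmon (mv m B d i r)))"
  hence "x \<in> (\<Union>r\<in>I. KV (qmult m L (coef (h i r)) (Xmon (mv m B d i r))))"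
    by (rule subsetD[OF KV_sum])
  then obtain r where "r \<in> I" "x \<in> KV (qmult m L (coef (h i r)) (Xmon (mv m B d i r)))" by auto
  hence "x = mv m B d i r" using KV_term by blast
  thus "x \<in> mv m B d i ` I" using \<open>r \<in> I\<close> by auto
qed


declare One_nat_def[simp del]

definition supp :: "nat \<Rightarrow> vec \<Rightarrow> bool" where "supp m c = (\<forall>i. i \<notin> {1..m} \<longrightarrow> c i = 0)"

lemma ZP_gens_coef: "coef p \<in> ZP_gens n m" by (simp add: ZP_gens_def)
lemma ZP_gens_pos: "j \<in> {n+1..m} \<Longrightarrow> Xmon (unitv j) \<in> ZP_gens n m" by (simp add: ZP_gens_def)
lemma ZP_gens_neg: "j \<in> {n+1..m} \<Longrightarrow> Xmon (vneg (unitv j)) \<in> ZP_gens n m" by (simp add: ZP_gens_def)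

lemma gens_mon:
  assumes "ZP_gens 2 m \<subseteq> S" "supp m c"
    and "\<And>j. j \<in> {1,2} \<Longrightarrow> (c j \<ge> 0 \<or> Xmon (vneg (unitv j)) \<in> gen_subring m L S)
             \<and> (c j \<le> 0 \<or> Xmon (unitv j) \<in> gen_subring m L S)"
  shows "Xmon c \<in> gen_subring m L S"
proof (rule mon_in)
  show co: "\<And>p. coef p \<in> gen_subring m L S"
    using assms(1) ZP_gens_coef by (blast intro: gen_subring.base)
  show "\<forall>i. i \<notin> {1..m} \<longrightarrow> c i = 0" using assms(2) by (simp add: supp_def)
  show "\<forall>j\<in>{1..m}. Xmon (\<lambda>i. if i = j then c j else 0) \<in> gen_subring m L S"
  proof
    fix j assume j: "j \<in> {1..m}"
    show "Xmon (\<lambda>i. if i = j then c j else 0) \<in> gen_subring m L S"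
    proof (cases "j \<in> {1,2}")
      case True
      then show ?thesis using assms(3)[OF True] co by (intro xmon_pow_int) auto
    next
      case False
      hence "j \<in> {2+1..m}" using j by auto
      hence "Xmon (unitv j) \<in> gen_subring m L S" "Xmon (vneg (unitv j)) \<in> gen_subring m L S"
        using assms(1) ZP_gens_pos[of j 2 m] ZP_gens_neg[of j 2 m] by (auto intro: gen_subring.base)
      then show ?thesis using co by (intro xmon_pow_int) auto
    qed
  qed
qed

lemma gs_base: "x \<in> S \<Longrightarrow> x \<in> gen_subring m L S" by (rule gen_subring.base)



context
  fixes m :: nat and L B :: "nat \<Rightarrow> nat \<Rightarrow> int" and d :: "nat \<Rightarrow> nat"
    and dt :: "nat \<Rightarrow> int" and h :: "nat \<Rightarrow> nat \<Rightarrow> laurent"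
  assumes mn: "m \<ge> 2"
    and skew: "\<forall>i\<in>{1..m}. \<forall>j\<in>{1..m}. L i j = - L j i"
    and dt_pos: "\<forall>l\<in>{1..2}. dt l > 0"
    and compat: "\<forall>k\<in>{1..m}. \<forall>l\<in>{1..2}.
        (\<Sum>j\<in>{1..m}. L k j * B j l) = (if k = l then - dt l else 0)"
    and d_pos: "\<forall>k\<in>{1..2}. d k > 0"
    and d_dvd: "\<forall>k\<in>{1..2}. \<forall>j\<in>{1..m}. int (d k) dvd B j k"
    and h_end: "\<forall>k\<in>{1..2}. h k 0 = Poly_Mapping.single 0 1 \<and> h k (d k) = Poly_Mapping.single 0 1"
    and b12: "B 1 2 \<noteq> 0"
begin

lemma B_diag: assumes "l \<in> {1,2}" shows "B l l = 0"
proof -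
  have l: "l \<in> {1..m}" "l \<in> {1..2}" using assms mn by auto
  define Q where "Q = (\<Sum>k\<in>{1..m}. \<Sum>j\<in>{1..m}. B k l * L k j * B j l)"
  have "Q = (\<Sum>k\<in>{1..m}. B k l * (\<Sum>j\<in>{1..m}. L k j * B j l))"
    unfolding Q_def by (simp add: sum_distrib_left mult.assoc)
  also have "\<dots> = (\<Sum>k\<in>{1..m}. if k = l then B l l * (- dt l) else 0)"
    using compat l by (intro sum.cong) auto
  also have "\<dots> = B l l * (- dt l)" using l(1) by simp
  finally have Q1: "Q = B l l * (- dt l)" .
  have "Q = (\<Sum>k\<in>{1..m}. \<Sum>j\<in>{1..m}. - (B j l * L j k * B k l))"
    unfolding Q_def
  proof (intro sum.cong refl)
    fix k j assume "k \<in> {1..m}" "j \<in> {1..m}"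
    hence "L k j = - L j k" using skew by blast
    thus "B k l * L k j * B j l = - (B j l * L j k * B k l)" by (simp add: mult_ac)
  qed
  also have "\<dots> = - (\<Sum>j\<in>{1..m}. \<Sum>k\<in>{1..m}. B j l * L j k * B k l)"
    by (subst sum.swap) (simp add: sum_negf)
  also have "\<dots> = - Q" unfolding Q_def by simp
  finally have "Q = 0" by simp
  hence "B l l * dt l = 0" using Q1 by simp
  moreover have "dt l > 0" using dt_pos l by auto
  ultimately show ?thesis by simp
qed

lemma beta_diag: assumes "i \<in> {1,2}" shows "beta m B d i i = 0"
  using B_diag[OF assms] assms mn by (auto simp: beta_def)

definition bet where "bet = B 1 2 div int (d 2)"

lemma bet_prop: "B 1 2 = int (d 2) * bet" "bet \<noteq> 0" "B 1 2 > 0 \<longleftrightarrow> bet > 0"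
proof -
  have "int (d 2) dvd B 1 2" using d_dvd mn by auto
  thus e: "B 1 2 = int (d 2) * bet" unfolding bet_def by simp
  show "bet \<noteq> 0" using e b12 by auto
  have "d 2 > 0" using d_pos by auto
  thus "B 1 2 > 0 \<longleftrightarrow> bet > 0" using e by (simp add: zero_less_mult_iff)
qed

lemma beta21: "beta m B d 2 1 = bet"
  using mn by (simp add: beta_def bet_def)

lemma mv_supp: assumes "i \<in> {1,2}" shows "supp m (mv m B d i r)"
  using assms mn by (auto simp: supp_def mv_def beta_def vpos_def vneg_def unitv_def)

lemma mv_diag: assumes "i \<in> {1,2}" shows "mv m B d i r i = -1"
  using beta_diag[OF assms] by (simp add: mv_def vpos_def vneg_def unitv_def)

lemma mv21: "mv m B d 2 r 1 = int r * max bet 0 + int (d 2 - r) * max (- bet) 0"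
  using beta21 by (simp add: mv_def vpos_def vneg_def unitv_def)

definition r0 where "r0 = (if B 1 2 > 0 then 0 else d 2)"

lemma r0_in: "r0 \<in> {0..d 2}" by (simp add: r0_def)

lemma mv_r0: "mv m B d 2 r0 1 = 0"
  unfolding mv21 using bet_prop by (auto simp: r0_def)

lemma mv_other: assumes "r \<in> {0..d 2}" "r \<noteq> r0" shows "mv m B d 2 r 1 \<ge> 1"
proof (cases "B 1 2 > 0")
  case True
  hence "bet \<ge> 1" "r \<ge> 1" using bet_prop assms by (auto simp: r0_def)
  hence "int r * bet \<ge> 1" using mult_mono[of 1 "int r" 1 bet] by simp
  then show ?thesis unfolding mv21 using \<open>bet \<ge> 1\<close> by simp
next
  case False
  hence "bet \<le> -1" "r < d 2" using bet_prop assms by (auto simp: r0_def)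
  hence "int (d 2 - r) * (- bet) \<ge> 1"
  proof -
    have a: "int (d 2 - r) \<ge> 1" using \<open>r < d 2\<close> by simp
    have b: "- bet \<ge> 1" using \<open>bet \<le> -1\<close> by simp
    have "1 * 1 \<le> int (d 2 - r) * (- bet)" by (rule mult_mono[OF a b]) auto
    thus ?thesis by (simp only: mult_1_left)
  qed
  moreover have e: "int (d 2 - r) = int (d 2) - int r" using \<open>r < d 2\<close> by simp
  ultimately show ?thesis unfolding mv21 using \<open>bet \<le> -1\<close> by (simp only: e)
qed


lemma supp_zvec[simp]: "supp m zvec" by (simp add: supp_def zvec_def)
lemma supp_unitv: "j \<in> {1..m} \<Longrightarrow> supp m (unitv j)" by (auto simp: supp_def unitv_def)
lemma supp_vneg: "supp m v \<Longrightarrow> supp m (vneg v)" by (auto simp: supp_def vneg_def)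
lemma supp_vadd: "supp m a \<Longrightarrow> supp m b \<Longrightarrow> supp m (vadd a b)" by (auto simp: supp_def vadd_def)

abbreviation "Y1 \<equiv> Xmut m L B d h 1"
abbreviation "Y2 \<equiv> Xmut m L B d h 2"
abbreviation "Sc \<equiv> ZP_gens 2 m \<union> {Xmon (unitv 1), Xmon (unitv 2), Xmon (vneg (unitv 2))}"
abbreviation "Sa \<equiv> ZP_gens 2 m \<union> {Xmon (unitv 1), Y1, Xmon (unitv 2), Y2}"
abbreviation "Sl \<equiv> ZP_gens 2 m \<union> {Xmon (unitv 1), Y1, Xmon (unitv 2), Xmon (vneg (unitv 2))}"
abbreviation "Cs \<equiv> gen_subring m L Sc"
abbreviation "As \<equiv> gen_subring m L Sa"
abbreviation "Ls \<equiv> gen_subring m L Sl"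
abbreviation "AC \<equiv> set_plus_q As Cs"

lemma coef_C: "coef p \<in> Cs" by (rule gs_base) (simp add: ZP_gens_coef)
lemma coef_A: "coef p \<in> As" by (rule gs_base) (simp add: ZP_gens_coef)

lemma C_mon: "supp m c \<Longrightarrow> c 1 \<ge> 0 \<Longrightarrow> Xmon c \<in> Cs"
  by (rule gens_mon) (auto intro: gs_base)

lemma A_mon: "supp m c \<Longrightarrow> c 1 \<ge> 0 \<Longrightarrow> c 2 \<ge> 0 \<Longrightarrow> Xmon c \<in> As"
  by (rule gens_mon) (auto intro: gs_base)

lemma C_span: assumes "\<And>c. c \<in> KV f \<Longrightarrow> supp m c \<and> c 1 \<ge> 0" shows "f \<in> Cs"
proof (rule span_mem)
  show "\<And>p. coef p \<in> Cs" by (rule coef_C)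
  fix c assume "c \<in> KV f"
  thus "Xmon c \<in> Cs" using assms C_mon by blast
qed

lemma C_KV: "f \<in> Cs \<Longrightarrow> c \<in> KV f \<Longrightarrow> supp m c \<and> c 1 \<ge> 0"
proof (induction f arbitrary: c rule: gen_subring.induct)
  case (base x)
  note cx = base.prems
  from base.hyps consider (co) p where "x = coef p" | (fp) j where "j \<in> {3..m}" "x = Xmon (unitv j)"
    | (fn) j where "j \<in> {3..m}" "x = Xmon (vneg (unitv j))"
    | (e1) "x = Xmon (unitv 1)" | (e2) "x = Xmon (unitv 2)" | (ne2) "x = Xmon (vneg (unitv 2))"
    by (auto simp: ZP_gens_def)
  then show ?case
  proof cases
    case co
    show ?thesis using cx co KV_coef[of p] by (auto simp: zvec_def supp_def)
  next
    case fp
    show ?thesis using cx fp by (auto simp: KV_Xmon supp_def unitv_def)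
  next
    case fn
    show ?thesis using cx fn by (auto simp: KV_Xmon supp_def unitv_def vneg_def)
  next
    case e1
    show ?thesis using cx e1 mn by (auto simp: KV_Xmon supp_def unitv_def)
  next
    case e2
    show ?thesis using cx e2 mn by (auto simp: KV_Xmon supp_def unitv_def)
  next
    case ne2
    show ?thesis using cx ne2 mn by (auto simp: KV_Xmon supp_def unitv_def vneg_def)
  qed
next
  case one
  then show ?case by (simp add: KV_Xmon zvec_def supp_def)
next
  case zero
  then show ?case by (simp add: KV_def)
next
  case (add x y)
  then show ?case using KV_add[of x y] by auto
next
  case (neg x)
  then show ?case by simp
next
  case (mult x y)
  from mult.prems obtain a b where "a \<in> KV x" "b \<in> KV y" "c = vadd a b"
    using KV_qmult[of m L x y] by blast
  moreover have "supp m a" "a 1 \<ge> 0" using mult.IH(1) \<open>a \<in> KV x\<close> by auto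
  moreover have "supp m b" "b 1 \<ge> 0" using mult.IH(2) \<open>b \<in> KV y\<close> by auto
  ultimately show ?case using supp_vadd[of a b] by (simp add: vadd_def)
qed

lemma KV_Y: "i \<in> {1,2} \<Longrightarrow> KV (Xmut m L B d h i) \<subseteq> mv m B d i ` {0..d i}"
  unfolding Xmut_mv by (rule KV_Xmut)

lemma Y2_C: "Y2 \<in> Cs"
proof (rule C_span)
  fix c assume "c \<in> KV Y2"
  then obtain r where "c = mv m B d 2 r" using KV_Y[of 2] by auto
  thus "supp m c \<and> c 1 \<ge> 0" using mv_supp[of 2 r] by (simp add: mv21)
qed

lemma Y1_e1: "qmult m L Y1 (Xmon (unitv 1)) \<in> Cs \<and> qmult m L (Xmon (unitv 1)) Y1 \<in> Cs"
proof
  have u: "supp m (unitv 1)" using supp_unitv[of 1] mn by simp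
  show "qmult m L Y1 (Xmon (unitv 1)) \<in> Cs"
  proof (rule C_span)
    fix c assume "c \<in> KV (qmult m L Y1 (Xmon (unitv 1)))"
    then obtain a b where "a \<in> KV Y1" "b \<in> KV (Xmon (unitv 1))" "c = vadd a b"
      using KV_qmult[of m L Y1 "Xmon (unitv 1)"] by blast
    moreover then obtain r where "a = mv m B d 1 r" using KV_Y[of 1] by auto
    ultimately have "c = vadd (mv m B d 1 r) (unitv 1)" by (simp add: KV_Xmon)
    moreover have "supp m (vadd (mv m B d 1 r) (unitv 1))" using mv_supp[of 1 r] u by (simp add: supp_vadd)
    ultimately show "supp m c \<and> c 1 \<ge> 0"
      using mv_diag[of 1 r] by (simp add: vadd_def unitv_def)
  qed
  show "qmult m L (Xmon (unitv 1)) Y1 \<in> Cs"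
  proof (rule C_span)
    fix c assume "c \<in> KV (qmult m L (Xmon (unitv 1)) Y1)"
    then obtain a b where "b \<in> KV Y1" "a \<in> KV (Xmon (unitv 1))" "c = vadd a b"
      using KV_qmult[of m L "Xmon (unitv 1)" Y1] by blast
    moreover then obtain r where "b = mv m B d 1 r" using KV_Y[of 1] by auto
    ultimately have "c = vadd (unitv 1) (mv m B d 1 r)" by (simp add: KV_Xmon)
    moreover have "supp m (vadd (unitv 1) (mv m B d 1 r))" using mv_supp[of 1 r] u by (simp add: supp_vadd)
    ultimately show "supp m c \<and> c 1 \<ge> 0"
      using mv_diag[of 1 r] by (simp add: vadd_def unitv_def)
  qed
qed

lemma alpha: assumes "supp m c" "c 1 \<ge> 1"
  shows "qmult m L Y1 (Xmon c) \<in> Cs \<and> qmult m L (Xmon c) Y1 \<in> Cs"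
proof -
  define c' where "c' = (\<lambda>i. c i - unitv 1 i)"
  have c'1: "supp m c'" "c' 1 \<ge> 0" using assms mn by (auto simp: c'_def supp_def unitv_def)
  have v1: "c = vadd (unitv 1) c'" "c = vadd c' (unitv 1)" by (auto simp: vadd_def c'_def)
  have X: "Xmon c' \<in> Cs" using C_mon c'1 by blast
  have "qmult m L Y1 (Xmon c) = qmult m L Y1 (qmult m L (qmult m L (Xmon (unitv 1)) (Xmon c')) (coef (Poly_Mapping.single (- lam m L (unitv 1) c') 1)))"
    by (subst v1(1)) (subst Xmon_vadd1[of _ _ m L], rule refl)
  also have "\<dots> = qmult m L (qmult m L (qmult m L Y1 (Xmon (unitv 1))) (Xmon c')) (coef (Poly_Mapping.single (- lam m L (unitv 1) c') 1))"
    by (simp only: qmult_assoc)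
  also have "\<dots> \<in> Cs" using Y1_e1 X coef_C by (blast intro: gen_subring.mult)
  finally have r1: "qmult m L Y1 (Xmon c) \<in> Cs" .
  have "qmult m L (Xmon c) Y1 = qmult m L (qmult m L (coef (Poly_Mapping.single (- lam m L c' (unitv 1)) 1)) (qmult m L (Xmon c') (Xmon (unitv 1)))) Y1"
    by (subst v1(2)) (subst Xmon_vadd2[of _ _ m L], rule refl)
  also have "\<dots> = qmult m L (coef (Poly_Mapping.single (- lam m L c' (unitv 1)) 1)) (qmult m L (Xmon c') (qmult m L (Xmon (unitv 1)) Y1))"
    by (simp only: qmult_assoc)
  also have "\<dots> \<in> Cs" using Y1_e1 X coef_C by (blast intro: gen_subring.mult)
  finally show ?thesis using r1 by blast
qed

lemma Cs_closed: "0 \<in> Cs" "\<And>x y. x \<in> Cs \<Longrightarrow> y \<in> Cs \<Longrightarrow> x + y \<in> Cs"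
  by (auto intro: gen_subring.intros)

lemma alpha': assumes "\<And>c. c \<in> KV f \<Longrightarrow> supp m c \<and> c 1 \<ge> 1"
  shows "qmult m L Y1 f \<in> Cs \<and> qmult m L f Y1 \<in> Cs"
proof
  show "qmult m L Y1 f \<in> Cs"
  proof (rule span_apply_right[OF Cs_closed])
    fix c p assume "c \<in> KV f"
    hence "qmult m L Y1 (Xmon c) \<in> Cs" using assms alpha by blast
    thus "qmult m L (qmult m L Y1 (Xmon c)) (coef p) \<in> Cs" using coef_C by (rule gen_subring.mult)
  qed
  show "qmult m L f Y1 \<in> Cs"
  proof (rule span_apply_left[OF Cs_closed])
    fix c p assume "c \<in> KV f"
    hence "qmult m L (Xmon c) Y1 \<in> Cs" using assms alpha by blast
    thus "qmult m L (coef p) (qmult m L (Xmon c) Y1) \<in> Cs" using coef_C by (rule gen_subring.mult[rotated])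
  qed
qed


definition pv where "pv = mv m B d 2 r0"
definition Rt where "Rt = (\<Sum>r\<in>{0..d 2} - {r0}. qmult m L (coef (h 2 r)) (Xmon (mv m B d 2 r)))"

lemma Y2_decomp: "Y2 = Xmon pv + Rt"
proof -
  have h0: "h 2 r0 = Poly_Mapping.single 0 1" using h_end by (auto simp: r0_def)
  have "Y2 = (\<Sum>r\<in>{0..d 2}. qmult m L (coef (h 2 r)) (Xmon (mv m B d 2 r)))" by (rule Xmut_mv)
  also have "\<dots> = qmult m L (coef (h 2 r0)) (Xmon (mv m B d 2 r0)) + Rt"
    unfolding Rt_def by (rule sum.remove[OF _ r0_in]) simp
  also have "qmult m L (coef (h 2 r0)) (Xmon (mv m B d 2 r0)) = Xmon pv"
    unfolding h0 coef_one pv_def by simp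
  finally show ?thesis .
qed

lemma pv_props: "supp m pv" "pv 1 = 0" "pv 2 = -1"
  using mv_supp[of 2 r0] mv_r0 mv_diag[of 2 r0] by (auto simp: pv_def)

lemma KV_Rt: "c \<in> KV Rt \<Longrightarrow> supp m c \<and> c 1 \<ge> 1"
proof -
  assume "c \<in> KV Rt"
  hence "c \<in> mv m B d 2 ` ({0..d 2} - {r0})"
    using KV_Xmut[of m L h 2 B d "{0..d 2} - {r0}"] unfolding Rt_def by (rule subsetD[rotated])
  then obtain r where "r \<in> {0..d 2} - {r0}" "c = mv m B d 2 r" by (rule imageE)
  thus ?thesis using mv_supp[of 2 r] mv_other[of r] by auto
qed

lemma AC_A: "x \<in> As \<Longrightarrow> x \<in> AC"
  unfolding set_plus_q_def by (rule CollectI, rule exI[of _ x], rule exI[of _ 0]) (auto intro: gen_subring.zero)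
lemma AC_C: "x \<in> Cs \<Longrightarrow> x \<in> AC"
  unfolding set_plus_q_def by (rule CollectI, rule exI[of _ 0], rule exI[of _ x]) (auto intro: gen_subring.zero)
lemma AC_E: "x \<in> AC \<Longrightarrow> (\<And>a c. x = a + c \<Longrightarrow> a \<in> As \<Longrightarrow> c \<in> Cs \<Longrightarrow> P) \<Longrightarrow> P"
  unfolding set_plus_q_def by blast
lemma AC_I: "a \<in> As \<Longrightarrow> c \<in> Cs \<Longrightarrow> a + c \<in> AC"
  unfolding set_plus_q_def by blast
lemma AC_add: assumes "x \<in> AC" "y \<in> AC" shows "x + y \<in> AC"
proof -
  obtain a c where "x = a + c" "a \<in> As" "c \<in> Cs" using assms(1) by (rule AC_E)
  moreover obtain a' c' where "y = a' + c'" "a' \<in> As" "c' \<in> Cs" using assms(2) by (rule AC_E)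
  ultimately have "x + y = (a + a') + (c + c')" "a + a' \<in> As" "c + c' \<in> Cs"
    by (auto simp: algebra_simps intro: gen_subring.add)
  thus ?thesis using AC_I by simp
qed
lemma AC_neg: assumes "x \<in> AC" shows "- x \<in> AC"
proof -
  obtain a c where "x = a + c" "a \<in> As" "c \<in> Cs" using assms(1) by (rule AC_E)
  thus ?thesis using AC_I[of "-a" "-c"] by (auto intro: gen_subring.neg)
qed
lemma AC_diff: "x \<in> AC \<Longrightarrow> y \<in> AC \<Longrightarrow> x - y \<in> AC"
  using AC_add[of x "-y"] AC_neg by simp
lemma AC_zero: "0 \<in> AC" using AC_C gen_subring.zero by blast
lemma AC_both: assumes "x \<in> AC" "y \<in> As" "y \<in> Cs"
  shows "qmult m L x y \<in> AC" "qmult m L y x \<in> AC"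
proof -
  obtain a c where "x = a + c" "a \<in> As" "c \<in> Cs" using assms(1) by (rule AC_E)
  note acs = this
  have "qmult m L a y \<in> As" "qmult m L c y \<in> Cs" "qmult m L y a \<in> As" "qmult m L y c \<in> Cs"
    using acs assms by (auto intro: gen_subring.mult)
  moreover have "qmult m L x y = qmult m L a y + qmult m L c y" "qmult m L y x = qmult m L y a + qmult m L y c"
    using acs(1) by (simp_all only: qmult_add_left qmult_add_right)
  ultimately show "qmult m L x y \<in> AC" "qmult m L y x \<in> AC"
    by (simp_all only: AC_I)
qed

lemma Y1_A: "Y1 \<in> As" by (rule gs_base) simp
lemma Y2_A: "Y2 \<in> As" by (rule gs_base) simp

lemma key: "supp m c \<Longrightarrow> c 1 \<ge> 0 \<Longrightarrow> qmult m L Y1 (Xmon c) \<in> AC \<and> qmult m L (Xmon c) Y1 \<in> AC"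
proof (induction "nat (- c 2)" arbitrary: c rule: less_induct)
  case less
  show ?case
  proof (cases "c 1 \<ge> 1")
    case True
    then show ?thesis using alpha[OF less.prems(1) True] AC_C by blast
  next
    case False
    hence c10: "c 1 = 0" using less.prems by simp
    show ?thesis
    proof (cases "c 2 \<ge> 0")
      case True
      hence "Xmon c \<in> As" using A_mon less.prems by blast
      then show ?thesis using Y1_A AC_A by (blast intro: gen_subring.mult)
    next
      case False
      define u where "u = (\<lambda>i. c i - pv i)"
      have cu: "c = vadd u pv" "c = vadd pv u" by (auto simp: u_def vadd_def)
      have su: "supp m u" using less.prems(1) pv_props(1) by (auto simp: supp_def u_def)
      have u1: "u 1 = 0" using c10 pv_props by (simp add: u_def)
      have u2: "u 2 = c 2 + 1" using pv_props by (simp add: u_def)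
      have "nat (- u 2) < nat (- c 2)" using u2 False by simp
      hence IH: "qmult m L Y1 (Xmon u) \<in> AC" "qmult m L (Xmon u) Y1 \<in> AC"
        using less.hyps[of u] su u1 by auto
      define K1 where "K1 = coef (Poly_Mapping.single (- lam m L u pv) 1)"
      define K2 where "K2 = coef (Poly_Mapping.single (- lam m L pv u) 1)"
      have XP: "Xmon pv = Y2 - Rt" using Y2_decomp by simp
      have KVuR: "\<And>v. v \<in> KV (qmult m L (Xmon u) Rt) \<Longrightarrow> supp m v \<and> v 1 \<ge> 1"
      proof -
        fix v assume "v \<in> KV (qmult m L (Xmon u) Rt)"
        then obtain a b where "a \<in> KV (Xmon u)" "b \<in> KV Rt" "v = vadd a b"
          using KV_qmult[of m L "Xmon u" Rt] by blast
        thus "supp m v \<and> v 1 \<ge> 1" using KV_Rt[of b] su u1 supp_vadd[of u b]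
          by (auto simp: KV_Xmon vadd_def)
      qed
      have KVRu: "\<And>v. v \<in> KV (qmult m L Rt (Xmon u)) \<Longrightarrow> supp m v \<and> v 1 \<ge> 1"
      proof -
        fix v assume "v \<in> KV (qmult m L Rt (Xmon u))"
        then obtain a b where "a \<in> KV Rt" "b \<in> KV (Xmon u)" "v = vadd a b"
          using KV_qmult[of m L Rt "Xmon u"] by blast
        thus "supp m v \<and> v 1 \<ge> 1" using KV_Rt[of a] su u1 supp_vadd[of a u]
          by (auto simp: KV_Xmon vadd_def)
      qed
      have "qmult m L Y1 (Xmon c) = qmult m L Y1 (qmult m L (qmult m L (Xmon u) (Xmon pv)) K1)"
        unfolding K1_def by (subst cu(1)) (subst Xmon_vadd1[of _ _ m L], rule refl)
      also have "\<dots> = qmult m L (qmult m L (qmult m L Y1 (Xmon u)) Y2) K1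
                    - qmult m L (qmult m L Y1 (qmult m L (Xmon u) Rt)) K1"
        unfolding XP by (simp only: qmult_assoc qmult_diff_left qmult_diff_right)
      also have "\<dots> \<in> AC"
      proof (rule AC_diff)
        show "qmult m L (qmult m L (qmult m L Y1 (Xmon u)) Y2) K1 \<in> AC"
          unfolding K1_def using AC_both(1)[OF AC_both(1)[OF IH(1) Y2_A Y2_C] coef_A coef_C] .
        have cc: "qmult m L Y1 (qmult m L (Xmon u) Rt) \<in> Cs" using alpha'[OF KVuR] by blast
        show "qmult m L (qmult m L Y1 (qmult m L (Xmon u) Rt)) K1 \<in> AC"
          unfolding K1_def using gen_subring.mult[OF cc coef_C] by (rule AC_C)
      qed
      finally have r1: "qmult m L Y1 (Xmon c) \<in> AC" .
      have "qmult m L (Xmon c) Y1 = qmult m L (qmult m L K2 (qmult m L (Xmon pv) (Xmon u))) Y1"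
        unfolding K2_def by (subst cu(2)) (subst Xmon_vadd2[of _ _ m L], rule refl)
      also have "\<dots> = qmult m L K2 (qmult m L Y2 (qmult m L (Xmon u) Y1))
                    - qmult m L K2 (qmult m L (qmult m L Rt (Xmon u)) Y1)"
        unfolding XP by (simp only: qmult_assoc qmult_diff_left qmult_diff_right)
      also have "\<dots> \<in> AC"
      proof (rule AC_diff)
        show "qmult m L K2 (qmult m L Y2 (qmult m L (Xmon u) Y1)) \<in> AC"
          unfolding K2_def using AC_both(2)[OF AC_both(2)[OF IH(2) Y2_A Y2_C] coef_A coef_C] .
        have cc: "qmult m L (qmult m L Rt (Xmon u)) Y1 \<in> Cs" using alpha'[OF KVRu] by blast
        show "qmult m L K2 (qmult m L (qmult m L Rt (Xmon u)) Y1) \<in> AC"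
          unfolding K2_def using gen_subring.mult[OF coef_C cc] by (rule AC_C)
      qed
      finally show ?thesis using r1 by blast
    qed
  qed
qed


lemma AC_closed: "0 \<in> AC" "\<And>x y. x \<in> AC \<Longrightarrow> y \<in> AC \<Longrightarrow> x + y \<in> AC"
  by (rule AC_zero) (rule AC_add)

lemma Y1_C: assumes "c \<in> Cs" shows "qmult m L Y1 c \<in> AC" "qmult m L c Y1 \<in> AC"
proof -
  show "qmult m L Y1 c \<in> AC"
  proof (rule span_apply_right[OF AC_closed])
    fix v p assume "v \<in> KV c"
    hence "supp m v \<and> v 1 \<ge> 0" using C_KV assms by blast
    hence "qmult m L Y1 (Xmon v) \<in> AC" using key by blast
    thus "qmult m L (qmult m L Y1 (Xmon v)) (coef p) \<in> AC" using coef_A coef_C by (rule AC_both)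
  qed
  show "qmult m L c Y1 \<in> AC"
  proof (rule span_apply_left[OF AC_closed])
    fix v p assume "v \<in> KV c"
    hence "supp m v \<and> v 1 \<ge> 0" using C_KV assms by blast
    hence "qmult m L (Xmon v) Y1 \<in> AC" using key by blast
    thus "qmult m L (coef p) (qmult m L (Xmon v) Y1) \<in> AC" using coef_A coef_C by (rule AC_both)
  qed
qed

lemma Sa_C: "x \<in> Sa \<Longrightarrow> x \<noteq> Y1 \<Longrightarrow> x \<in> Cs"
proof -
  assume "x \<in> Sa" "x \<noteq> Y1"
  hence "x \<in> Sc \<or> x = Y2" by (simp only: Un_iff insert_iff empty_iff) blast
  thus "x \<in> Cs" using Y2_C gs_base[of x Sc m L] by blast
qed

lemma claim1: "a \<in> As \<Longrightarrow> c \<in> Cs \<Longrightarrow> qmult m L a c \<in> AC \<and> qmult m L c a \<in> AC"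
proof (induction a arbitrary: c rule: gen_subring.induct)
  case (base x)
  show ?case
  proof (cases "x = Y1")
    case True
    then show ?thesis using Y1_C[OF base.prems] by simp
  next
    case False
    hence "x \<in> Cs" using Sa_C base.hyps by blast
    then show ?thesis using base.prems by (blast intro: AC_C gen_subring.mult)
  qed
next
  case one
  then show ?case using AC_C by simp
next
  case zero
  then show ?case using AC_zero by simp
next
  case (add x y)
  have a1: "qmult m L x c \<in> AC \<and> qmult m L c x \<in> AC" using add.IH(1) add.prems by blast
  have a2: "qmult m L y c \<in> AC \<and> qmult m L c y \<in> AC" using add.IH(2) add.prems by blast
  show ?case unfolding qmult_add_left qmult_add_right using a1 a2 AC_add by blast
next
  case (neg x)
  have a1: "qmult m L x c \<in> AC \<and> qmult m L c x \<in> AC" using neg.IH neg.prems by blast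
  show ?case unfolding qmult_neg_left qmult_neg_right using a1 AC_neg by blast
next
  case (mult x y)
  have "qmult m L y c \<in> AC" using mult.IH(2) mult.prems by blast
  then obtain a1 c1 where e1: "qmult m L y c = a1 + c1" "a1 \<in> As" "c1 \<in> Cs" by (rule AC_E)
  have "qmult m L (qmult m L x y) c = qmult m L x a1 + qmult m L x c1"
    by (simp add: qmult_assoc e1(1) qmult_add_right)
  moreover have "qmult m L x a1 \<in> As" using mult.hyps(1) e1(2) by (rule gen_subring.mult)
  moreover have "qmult m L x c1 \<in> AC" using mult.IH(1) e1(3) by blast
  ultimately have r1: "qmult m L (qmult m L x y) c \<in> AC" using AC_A AC_add by simp
  have "qmult m L c x \<in> AC" using mult.IH(1) mult.prems by blast
  then obtain a2 c2 where e2: "qmult m L c x = a2 + c2" "a2 \<in> As" "c2 \<in> Cs" by (rule AC_E)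
  have "qmult m L c (qmult m L x y) = qmult m L a2 y + qmult m L c2 y"
    by (simp add: qmult_assoc[symmetric] e2(1) qmult_add_left)
  moreover have "qmult m L a2 y \<in> As" using e2(2) mult.hyps(2) by (rule gen_subring.mult)
  moreover have "qmult m L c2 y \<in> AC" using mult.IH(2) e2(3) by blast
  ultimately have r2: "qmult m L c (qmult m L x y) \<in> AC" using AC_A AC_add by simp
  show ?case using r1 r2 by blast
qed

lemma AC_mult: assumes "x \<in> AC" "y \<in> AC" shows "qmult m L x y \<in> AC"
proof -
  obtain a c where e: "x = a + c" "a \<in> As" "c \<in> Cs" using assms(1) by (rule AC_E)
  obtain a' c' where e': "y = a' + c'" "a' \<in> As" "c' \<in> Cs" using assms(2) by (rule AC_E)
  have eq: "qmult m L x y = qmult m L a a' + qmult m L a c' + (qmult m L c a' + qmult m L c c')"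
    by (simp add: e(1) e'(1) qmult_add_left qmult_add_right)
  have t1: "qmult m L a a' \<in> AC" using gen_subring.mult[OF e(2) e'(2)] by (rule AC_A)
  have t4: "qmult m L c c' \<in> AC" using gen_subring.mult[OF e(3) e'(3)] by (rule AC_C)
  have t2: "qmult m L a c' \<in> AC" using claim1[OF e(2) e'(3)] by (rule conjunct1)
  have t3: "qmult m L c a' \<in> AC" using claim1[OF e'(2) e(3)] by (rule conjunct2)
  show ?thesis unfolding eq by (rule AC_add[OF AC_add[OF t1 t2] AC_add[OF t3 t4]])
qed

lemma L_sub: "x \<in> Ls \<Longrightarrow> x \<in> AC"
proof (induction rule: gen_subring.induct)
  case (base x)
  show ?case
  proof (cases "x = Y1")
    case True
    then show ?thesis using Y1_A AC_A by simp
  next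
    case False
    hence "x \<in> Sc" using base by auto
    then show ?thesis by (blast intro: AC_C gs_base)
  qed
next
  case one
  then show ?case by (blast intro: AC_C gen_subring.one)
next
  case zero
  then show ?case by (rule AC_zero)
next
  case (add x y)
  show ?case using add.IH by (rule AC_add)
next
  case (neg x)
  show ?case using neg.IH by (rule AC_neg)
next
  case (mult x y)
  show ?case using mult.IH by (rule AC_mult)
qed

lemma C_sub_L: "Cs \<subseteq> Ls" by (rule gs_mono) auto

lemma A_sub_L: "x \<in> As \<Longrightarrow> x \<in> Ls"
proof (induction rule: gen_subring.induct)
  case (base x)
  show ?case
  proof (cases "x = Y2")
    case True
    then show ?thesis using Y2_C C_sub_L by auto
  next
    case False
    hence "x \<in> Sl" using base by auto
    then show ?thesis by (rule gs_base)
  qed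
next
  case one show ?case by (rule gen_subring.one)
next
  case zero show ?case by (rule gen_subring.zero)
next
  case (add x y) show ?case using add.IH by (rule gen_subring.add)
next
  case (neg x) show ?case using neg.IH by (rule gen_subring.neg)
next
  case (mult x y) show ?case using mult.IH by (rule gen_subring.mult)
qed

lemma main_eq: "Ls = AC"
proof
  show "Ls \<subseteq> AC" using L_sub by blast
  show "AC \<subseteq> Ls"
  proof
    fix x assume "x \<in> AC"
    then obtain a c where "x = a + c" "a \<in> As" "c \<in> Cs" by (rule AC_E)
    thus "x \<in> Ls" using A_sub_L C_sub_L by (auto intro: gen_subring.add)
  qed
qed

end

theorem lemma4p4:
  fixes m :: nat and L B :: "nat \<Rightarrow> nat \<Rightarrow> int" and d :: "nat \<Rightarrow> nat"
    and dt :: "nat \<Rightarrow> int" and h :: "nat \<Rightarrow> nat \<Rightarrow> laurent"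
  assumes mn: "m \<ge> 2"
    and skew: "\<forall>i\<in>{1..m}. \<forall>j\<in>{1..m}. L i j = - L j i"
    and dt_pos: "\<forall>l\<in>{1..2}. dt l > 0"
    and compat: "\<forall>k\<in>{1..m}. \<forall>l\<in>{1..2}.
        (\<Sum>j\<in>{1..m}. L k j * B j l) = (if k = l then - dt l else 0)"
    and d_pos: "\<forall>k\<in>{1..2}. d k > 0"
    and d_dvd: "\<forall>k\<in>{1..2}. \<forall>j\<in>{1..m}. int (d k) dvd B j k"
    and h_end: "\<forall>k\<in>{1..2}. h k 0 = Poly_Mapping.single 0 1 \<and> h k (d k) = Poly_Mapping.single 0 1"
    and h_sym: "\<forall>k\<in>{1..2}. \<forall>r\<in>{0..d k}. h k r = h k (d k - r)"
    and b12: "B 1 2 \<noteq> 0"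
  shows "ZP_adj 2 m L {Xmon (unitv 1), Xmut m L B d h 1, Xmon (unitv 2), Xmon (vneg (unitv 2))}
       = set_plus_q
           (ZP_adj 2 m L {Xmon (unitv 1), Xmut m L B d h 1, Xmon (unitv 2), Xmut m L B d h 2})
           (ZP_adj 2 m L {Xmon (unitv 1), Xmon (unitv 2), Xmon (vneg (unitv 2))})"
  unfolding ZP_adj_def
  by (rule main_eq[OF mn skew dt_pos compat d_pos d_dvd h_end b12])

end
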